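(* Let $G,D\subsetneq\mathbb{R}^n$ be domains, and let $f:G\to D$ be a surjective mapping and $L\ge1$ such that \[ b_{G,\infty}(z_1,z_2)/L\le b_{D,\infty}(f(z_1),f(z_2))\le L\,b_{G,\infty}(z_1,z_2)\quad\text{for all } z_1,z_2\in G. \] Then $f$ is a quasiconformal homeomorphism (either sense-preserving or sense-reversing), and its linear dilatation satisfies $H_f(z)\le 4L^2$ for all $z\in G$.
   Context: For a domain $G\subsetneq\mathbb{R}^n$ and $z_1,z_2\in G$, $b_{G,\infty}(z_1,z_2)=\sup_{w\in\partial G}\frac{|z_1-z_2|}{\max\{|z_1-w|,|z_2-w|\}}$. For a homeomorphism $f$ and $z\in G$, the linear dilatation is $H_f(z)=\limsup_{r\to0}\frac{L_f(z,r)}{l_f(z,r)}$, where $L_f(z,r)=\sup\{|f(z_1)-f(z)|:|z_1-z|=r\}$ and $l_f(z,r)=\inf\{|f(z_1)-f(z)|:|z_1-z|=r\}$. *)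

theory Defs
  imports "HOL-Analysis.Analysis"
begin

definition domain :: "'a::euclidean_space set \<Rightarrow> bool" where
  "domain G \<longleftrightarrow> open G \<and> connected G \<and> G \<noteq> {}"

definition b_inf :: "'a::euclidean_space set \<Rightarrow> 'a \<Rightarrow> 'a \<Rightarrow> real" where
  "b_inf G z1 z2 = (SUP w\<in>frontier G. dist z1 z2 / max (dist z1 w) (dist z2 w))"

definition Lf :: "('a::euclidean_space \<Rightarrow> 'b::euclidean_space) \<Rightarrow> 'a \<Rightarrow> real \<Rightarrow> real" where
  "Lf f z r = (SUP y\<in>sphere z r. dist (f y) (f z))"

definition lf :: "('a::euclidean_space \<Rightarrow> 'b::euclidean_space) \<Rightarrow> 'a \<Rightarrow> real \<Rightarrow> real" where
  "lf f z r = (INF y\<in>sphere z r. dist (f y) (f z))"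

definition lin_dil :: "('a::euclidean_space \<Rightarrow> 'b::euclidean_space) \<Rightarrow> 'a \<Rightarrow> ereal" where
  "lin_dil f z = Limsup (at_right 0) (\<lambda>r. ereal (Lf f z r / lf f z r))"

text \<open>Metric definition of quasiconformality: a homeomorphism G -> D with
  linear dilatation bounded in G.\<close>
definition quasiconformal :: "'a::euclidean_space set \<Rightarrow> 'a set \<Rightarrow> ('a \<Rightarrow> 'a) \<Rightarrow> bool" where
  "quasiconformal G D f \<longleftrightarrow> (\<exists>g. homeomorphism G D f g) \<and> (\<exists>H. \<forall>z\<in>G. lin_dil f z \<le> ereal H)"

end

theory Submission
  imports Defs
begin

lemma aux_up:
  fixes d t q :: real
  assumes "0 < d" "0 \<le> t" "t / (d + t) \<le> q" "q \<le> 1/2"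
  shows "t \<le> 2 * q * d"
proof -
  have "t \<le> q * (d + t)" using assms by (simp add: divide_le_eq)
  hence "t * (1 - q) \<le> q * d" by (simp add: algebra_simps)
  moreover have "t * (1/2) \<le> t * (1 - q)" using assms by (intro mult_left_mono) auto
  ultimately show ?thesis by linarith
qed

lemma b_bounds:
  fixes S :: "'a::euclidean_space set"
  assumes "open S" "S \<noteq> {}" "S \<noteq> UNIV" "z \<in> S"
  shows "\<exists>d>0. ball z d \<subseteq> S \<and> (\<forall>y. dist z y / (d + dist z y) \<le> b_inf S z y \<and> b_inf S z y \<le> dist z y / d)"
proof -
  have fne: "frontier S \<noteq> {}" using frontier_not_empty assms by blast
  obtain w where w1: "w \<in> frontier S" and w2: "\<And>v. v \<in> frontier S \<Longrightarrow> dist z w \<le> dist z v"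
    using distance_attains_inf[OF frontier_closed fne] by blast
  have "z \<notin> frontier S" using assms by (simp add: frontier_def interior_open)
  define d where "d = dist z w"
  have dpos: "d > 0" using w1 \<open>z \<notin> frontier S\<close> d_def by auto
  have ball: "ball z d \<subseteq> S"
  proof
    fix y assume y: "y \<in> ball z d"
    show "y \<in> S"
    proof (rule ccontr)
      assume "y \<notin> S"
      moreover have "z \<in> ball z d \<inter> S" using dpos assms(4) by auto
      ultimately have "ball z d \<inter> frontier S \<noteq> {}"
        using connected_Int_frontier[of "ball z d" S] y by blast
      then obtain v where "v \<in> ball z d" "v \<in> frontier S" by blast
      thus False using w2 d_def by fastforce
    qed
  qed
  have up: "b_inf S z y \<le> dist z y / d" for y
    unfolding b_inf_def
  proof (rule cSUP_least[OF fne])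
    fix v assume v: "v \<in> frontier S"
    have "d \<le> max (dist z v) (dist y v)" using w2[OF v] d_def by auto
    thus "dist z y / max (dist z v) (dist y v) \<le> dist z y / d"
      using dpos by (intro divide_left_mono) auto
  qed
  have lo: "dist z y / (d + dist z y) \<le> b_inf S z y" for y
  proof -
    have bdd: "bdd_above ((\<lambda>v. dist z y / max (dist z v) (dist y v)) ` frontier S)"
    proof (rule bdd_aboveI2)
      fix v assume v: "v \<in> frontier S"
      have "d \<le> max (dist z v) (dist y v)" using w2[OF v] d_def by auto
      thus "dist z y / max (dist z v) (dist y v) \<le> dist z y / d"
        using dpos by (intro divide_left_mono) auto
    qed
    have "dist z y / max (dist z w) (dist y w) \<le> b_inf S z y"
      unfolding b_inf_def by (rule cSUP_upper[OF w1 bdd])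
    moreover have "max (dist z w) (dist y w) \<le> d + dist z y"
      using dist_triangle[of y w z] d_def by (auto simp: dist_commute)
    hence "dist z y / (d + dist z y) \<le> dist z y / max (dist z w) (dist y w)"
      using dpos d_def by (intro divide_left_mono mult_pos_pos) (auto simp: add_pos_nonneg less_max_iff_disj)
    ultimately show ?thesis by linarith
  qed
  show ?thesis using dpos ball up lo by blast
qed


lemma local_est:
  fixes G D :: "'a::euclidean_space set" and f :: "'a \<Rightarrow> 'a" and L :: real
  assumes oG: "open G" "G \<noteq> {}" "G \<noteq> UNIV" and oD: "open D" "D \<noteq> {}" "D \<noteq> UNIV"
    and fG: "f ` G = D" and L1: "L \<ge> 1"
    and hyp: "\<And>z1 z2. z1 \<in> G \<Longrightarrow> z2 \<in> G \<Longrightarrow>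
           b_inf G z1 z2 / L \<le> b_inf D (f z1) (f z2) \<and> b_inf D (f z1) (f z2) \<le> L * b_inf G z1 z2"
    and z: "z \<in> G"
  shows "\<exists>d>0. \<exists>d'>0. ball z d \<subseteq> G
     \<and> (\<forall>y\<in>G. dist z y \<le> d/(2*L) \<longrightarrow> dist (f z) (f y) \<le> 2*L*d'*dist z y/d)
     \<and> (\<forall>y\<in>G. dist z y \<le> d \<longrightarrow> d' * dist z y/(2*L*d) \<le> dist (f z) (f y))
     \<and> (\<forall>y\<in>G. dist (f z) (f y) \<le> d'/(2*L) \<longrightarrow> dist z y \<le> 2*L*d*dist (f z) (f y)/d')"
proof -
  obtain d where dpos: "d > 0" and ball: "ball z d \<subseteq> G"
    and bG: "\<And>y. dist z y / (d + dist z y) \<le> b_inf G z y \<and> b_inf G z y \<le> dist z y / d"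
    using b_bounds[OF oG z] by blast
  have fz: "f z \<in> D" using fG z by blast
  obtain d' where d'pos: "d' > 0"
    and bD: "\<And>y. dist (f z) y / (d' + dist (f z) y) \<le> b_inf D (f z) y \<and> b_inf D (f z) y \<le> dist (f z) y / d'"
    using b_bounds[OF oD fz] by blast
  have Lpos: "L > 0" using L1 by simp
  have U: "dist (f z) (f y) \<le> 2*L*d'*dist z y/d" if y: "y \<in> G" "dist z y \<le> d/(2*L)" for y
  proof -
    define t where "t = dist z y"
    define s where "s = dist (f z) (f y)"
    have "s / (d' + s) \<le> b_inf D (f z) (f y)" using bD[of "f y"] s_def by simp
    also have "\<dots> \<le> L * b_inf G z y" using hyp[OF z y(1)] by simp
    also have "\<dots> \<le> L * (t / d)" using bG[of y] t_def Lpos by (intro mult_left_mono) auto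
    finally have 1: "s / (d' + s) \<le> L * (t / d)" .
    have "L * t \<le> L * (d / (2*L))" using y(2) t_def Lpos by (intro mult_left_mono) auto
    also have "\<dots> = d / 2" using Lpos by simp
    finally have "L * (t / d) \<le> 1/2" using dpos by (simp add: divide_le_eq)
    from aux_up[OF d'pos _ 1 this] have "s \<le> 2 * (L * (t / d)) * d'" using s_def by simp
    thus ?thesis using s_def t_def by (simp add: mult_ac)
  qed
  have Lo: "d' * dist z y/(2*L*d) \<le> dist (f z) (f y)" if y: "y \<in> G" "dist z y \<le> d" for y
  proof -
    define t where "t = dist z y"
    define s where "s = dist (f z) (f y)"
    have "t / (2*d) \<le> t / (d + t)" using y(2) t_def dpos
      by (intro divide_left_mono) (auto simp: add_pos_nonneg)
    also have "\<dots> \<le> b_inf G z y" using bG[of y] t_def by simp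
    finally have "t / (2*d) / L \<le> b_inf G z y / L" using Lpos by (intro divide_right_mono) auto
    also have "\<dots> \<le> b_inf D (f z) (f y)" using hyp[OF z y(1)] by simp
    also have "\<dots> \<le> s / d'" using bD[of "f y"] s_def by simp
    finally have "t / (2*d) / L \<le> s / d'" .
    hence "d' * (t / (2*d) / L) \<le> s" using d'pos by (simp add: le_divide_eq mult.commute)
    thus ?thesis using s_def t_def by (simp add: mult.commute mult.left_commute)
  qed
  have V: "dist z y \<le> 2*L*d*dist (f z) (f y)/d'" if y: "y \<in> G" "dist (f z) (f y) \<le> d'/(2*L)" for y
  proof -
    define t where "t = dist z y"
    define s where "s = dist (f z) (f y)"
    have "t / (d + t) \<le> b_inf G z y" using bG[of y] t_def by simp
    also have "\<dots> \<le> L * b_inf D (f z) (f y)" using hyp[OF z y(1)] Lpos by (simp add: divide_le_eq mult.commute)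
    also have "\<dots> \<le> L * (s / d')" using bD[of "f y"] s_def Lpos by (intro mult_left_mono) auto
    finally have 1: "t / (d + t) \<le> L * (s / d')" .
    have "L * s \<le> L * (d' / (2*L))" using y(2) s_def Lpos by (intro mult_left_mono) auto
    also have "\<dots> = d' / 2" using Lpos by simp
    finally have "L * (s / d') \<le> 1/2" using d'pos by (simp add: divide_le_eq)
    from aux_up[OF dpos _ 1 this] have "t \<le> 2 * (L * (s / d')) * d" using t_def by simp
    thus ?thesis using s_def t_def by (simp add: mult_ac)
  qed
  show ?thesis using dpos d'pos ball U Lo V by blast
qed


theorem theorem4p10:
  fixes G D :: "'a::euclidean_space set" and f :: "'a \<Rightarrow> 'a" and L :: real
  assumes "domain G" "G \<noteq> UNIV" "domain D" "D \<noteq> UNIV"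
    and "f ` G = D"
    and "L \<ge> 1"
    and "\<And>z1 z2. z1 \<in> G \<Longrightarrow> z2 \<in> G \<Longrightarrow>
           b_inf G z1 z2 / L \<le> b_inf D (f z1) (f z2) \<and> b_inf D (f z1) (f z2) \<le> L * b_inf G z1 z2"
  shows "quasiconformal G D f \<and> (\<forall>z\<in>G. lin_dil f z \<le> ereal (4 * L^2))"
proof -
  have oG: "open G" "G \<noteq> {}" "G \<noteq> UNIV" using assms(1,2) by (auto simp: domain_def)
  have oD: "open D" "D \<noteq> {}" "D \<noteq> UNIV" using assms(3,4) by (auto simp: domain_def)
  have hyp: "\<And>z1 z2. z1 \<in> G \<Longrightarrow> z2 \<in> G \<Longrightarrow>
           b_inf G z1 z2 / L \<le> b_inf D (f z1) (f z2) \<and> b_inf D (f z1) (f z2) \<le> L * b_inf G z1 z2"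
    using assms by blast
  have est: "\<exists>d>0. \<exists>d'>0. ball z d \<subseteq> G
     \<and> (\<forall>y\<in>G. dist z y \<le> d/(2*L) \<longrightarrow> dist (f z) (f y) \<le> 2*L*d'*dist z y/d)
     \<and> (\<forall>y\<in>G. dist z y \<le> d \<longrightarrow> d' * dist z y/(2*L*d) \<le> dist (f z) (f y))
     \<and> (\<forall>y\<in>G. dist (f z) (f y) \<le> d'/(2*L) \<longrightarrow> dist z y \<le> 2*L*d*dist (f z) (f y)/d')"
    if "z \<in> G" for z
    apply (rule local_est[OF oG oD assms(5) assms(6)])
     apply (rule hyp; assumption)
    by (rule that)
  have Lpos: "L > 0" using assms(6) by simp
  have inj: "inj_on f G"
  proof (rule inj_onI)
    fix x y assume xy: "x \<in> G" "y \<in> G" "f x = f y"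
    obtain d d' where "d > 0" "d' > 0"
      and V: "\<forall>y\<in>G. dist (f x) (f y) \<le> d'/(2*L) \<longrightarrow> dist x y \<le> 2*L*d*dist (f x) (f y)/d'"
      using est[OF xy(1)] by blast
    have "dist x y \<le> 0" using V xy \<open>d' > 0\<close> Lpos by auto
    thus "x = y" by simp
  qed
  define g where "g = inv_into G f"
  have gf: "\<And>x. x \<in> G \<Longrightarrow> g (f x) = x" using inj g_def by simp
  have fg: "\<And>y. y \<in> D \<Longrightarrow> f (g y) = y" using assms(5) g_def by (auto simp: f_inv_into_f)
  have gD: "g ` D = G" using assms(5) gf by force
  have contf: "continuous_on G f"
    unfolding continuous_on_iff
  proof (intro ballI allI impI)
    fix z e assume z: "z \<in> G" and e: "(0::real) < e"
    obtain d d' where dp: "d > 0" "d' > 0"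
      and U: "\<forall>y\<in>G. dist z y \<le> d/(2*L) \<longrightarrow> dist (f z) (f y) \<le> 2*L*d'*dist z y/d"
      using est[OF z] by blast
    define k where "k = 2*L*d'/d"
    have kp: "k > 0" using dp Lpos k_def by simp
    show "\<exists>\<delta>>0. \<forall>y\<in>G. dist y z < \<delta> \<longrightarrow> dist (f y) (f z) < e"
    proof (intro exI[of _ "min (d/(2*L)) (e/k)"] conjI ballI impI)
      show "0 < min (d/(2*L)) (e/k)" using dp Lpos kp e by simp
      fix y assume y: "y \<in> G" "dist y z < min (d/(2*L)) (e/k)"
      hence "dist (f z) (f y) \<le> k * dist z y" using U k_def by (auto simp: dist_commute)
      also have "\<dots> < k * (e/k)" using y kp by (intro mult_strict_left_mono) (auto simp: dist_commute)
      also have "\<dots> = e" using kp by simp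
      finally show "dist (f y) (f z) < e" by (simp add: dist_commute)
    qed
  qed
  have contg: "continuous_on D g"
    unfolding continuous_on_iff
  proof (intro ballI allI impI)
    fix x e assume x: "x \<in> D" and e: "(0::real) < e"
    obtain z where z: "z \<in> G" "x = f z" using x assms(5) by blast
    obtain d d' where dp: "d > 0" "d' > 0"
      and V: "\<forall>y\<in>G. dist (f z) (f y) \<le> d'/(2*L) \<longrightarrow> dist z y \<le> 2*L*d*dist (f z) (f y)/d'"
      using est[OF z(1)] by blast
    define k where "k = 2*L*d/d'"
    have kp: "k > 0" using dp Lpos k_def by simp
    show "\<exists>\<delta>>0. \<forall>x'\<in>D. dist x' x < \<delta> \<longrightarrow> dist (g x') (g x) < e"
    proof (intro exI[of _ "min (d'/(2*L)) (e/k)"] conjI ballI impI)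
      show "0 < min (d'/(2*L)) (e/k)" using dp Lpos kp e by simp
      fix x' assume x': "x' \<in> D" "dist x' x < min (d'/(2*L)) (e/k)"
      define y where "y = g x'"
      have y: "y \<in> G" "f y = x'" using gD x' fg y_def by auto
      have gx: "g x = z" using z gf by simp
      have "dist z y \<le> k * dist (f z) (f y)" using V y x' z k_def by (auto simp: dist_commute)
      also have "\<dots> < k * (e/k)" using y x' z kp by (intro mult_strict_left_mono) (auto simp: dist_commute)
      also have "\<dots> = e" using kp by simp
      finally show "dist (g x') (g x) < e" using gx y_def by (simp add: dist_commute)
    qed
  qed
  have homeo: "homeomorphism G D f g"
    unfolding homeomorphism_def using assms(5) gD contf contg gf fg by auto
  have dil: "lin_dil f z \<le> ereal (4 * L^2)" if z: "z \<in> G" for z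
  proof -
    obtain d d' where dp: "d > 0" "d' > 0" and ball: "ball z d \<subseteq> G"
      and U: "\<forall>y\<in>G. dist z y \<le> d/(2*L) \<longrightarrow> dist (f z) (f y) \<le> 2*L*d'*dist z y/d"
      and Lo: "\<forall>y\<in>G. dist z y \<le> d \<longrightarrow> d' * dist z y/(2*L*d) \<le> dist (f z) (f y)"
      using est[OF z] by blast
    have ev: "eventually (\<lambda>r. ereal (Lf f z r / lf f z r) \<le> ereal (4 * L^2)) (at_right 0)"
      unfolding eventually_at_right_field
    proof (intro exI[of _ "d/(2*L)"] conjI allI impI)
      show "(0::real) < d/(2*L)" using dp Lpos by simp
      fix r :: real assume r: "0 < r" "r < d/(2*L)"
      have "d/(2*L) \<le> d" using dp assms(6) by (simp add: divide_le_eq)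
      hence rd: "r < d" using r by simp
      have sne: "sphere z r \<noteq> {}" using r by simp
      have sG: "y \<in> G" if "y \<in> sphere z r" for y using that rd ball by auto
      define X where "X = 2*L*d'*r/d"
      define Y where "Y = d' * r/(2*L*d)"
      have LX: "Lf f z r \<le> X" unfolding Lf_def
      proof (rule cSUP_least[OF sne])
        fix y assume "y \<in> sphere z r"
        thus "dist (f y) (f z) \<le> X" using sG U r X_def by (auto simp: dist_commute)
      qed
      have lY: "Y \<le> lf f z r" unfolding lf_def
      proof (rule cINF_greatest[OF sne])
        fix y assume "y \<in> sphere z r"
        thus "Y \<le> dist (f y) (f z)" using sG Lo rd Y_def by (auto simp: dist_commute)
      qed
      have Yp: "Y > 0" using Y_def dp r Lpos by simp
      have Xp: "X \<ge> 0" using X_def dp r Lpos by simp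
      have "Lf f z r / lf f z r \<le> X / Y" by (rule frac_le[OF Xp LX Yp lY])
      also have "X / Y = 4 * L^2" unfolding X_def Y_def using dp r Lpos by (simp add: field_simps power2_eq_square)
      finally show "ereal (Lf f z r / lf f z r) \<le> ereal (4 * L^2)" by simp
    qed
    show ?thesis unfolding lin_dil_def by (rule Limsup_bounded[OF ev])
  qed
  show ?thesis unfolding quasiconformal_def using homeo dil by blast
qed

end
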